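(* Let $\bm D\in\mathbb R^{n\times d}$ ($n\le d$) satisfy $\bm D\bm D^\top=\bm I_n$, let $\bar{\bm D}\in\mathbb R^{(d-n)\times d}$ satisfy $\bar{\bm D}\bm D^\top=\bm 0$, $\bar{\bm D}\bar{\bm D}^\top=\bm I_{d-n}$, and let $\bm A\in\mathbb R^{m\times n}$. Let $s_1,s_2$ be positive integers with $s_1,s_2\le n$ and let $\eta>0$. Suppose $\bm u,\bm v\in\mathbb R^d$ satisfy $\mathrm{supp}(\bm u)\cap\mathrm{supp}(\bm v)=\emptyset$, $\bm u$ is $s_1$-sparse, $\|\bm v\|_1-\|\bm v\|_2\le(s_2-\sqrt{s_2})\eta$ and $\|\bm v\|_\infty\le\eta$. Then $$|\langle\bm A\bm D\bm u,\bm A\bm D\bm v\rangle+\langle\bar{\bm D}\bm u,\bar{\bm D}\bm v\rangle|\le\Big(1+\frac{\sqrt2}{2}\Big)\eta\sqrt{s_2}\,\theta_{s_1,s_2}\|\bm u\|_2.$$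
   Context: A vector is $s$-sparse if it has at most $s$ nonzero entries; $\mathrm{supp}(\bm v)$ is the set of indices of nonzero entries. The $\bm D$-restricted orthogonality constant $\theta_{s,t}$ (for $\bm A$ and $\bm D$) is the smallest nonnegative number such that $|\langle\bm A\bm D\bm u,\bm A\bm D\bm v\rangle-\langle\bm D\bm u,\bm D\bm v\rangle|\le\theta_{s,t}\|\bm u\|_2\|\bm v\|_2$ for all $s$-sparse $\bm u\in\mathbb R^d$ and $t$-sparse $\bm v\in\mathbb R^d$. *)

theory Defs
  imports Complex_Main "Jordan_Normal_Form.Matrix"
begin

definition supp_vec :: "real vec \<Rightarrow> nat set" where
  "supp_vec v = {i. i < dim_vec v \<and> v $ i \<noteq> 0}"

definition sparse_vec :: "nat \<Rightarrow> real vec \<Rightarrow> bool" where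
  "sparse_vec s v \<longleftrightarrow> card (supp_vec v) \<le> s"

definition norm2_vec :: "real vec \<Rightarrow> real" where
  "norm2_vec v = sqrt (v \<bullet> v)"

definition norm1_vec :: "real vec \<Rightarrow> real" where
  "norm1_vec v = (\<Sum>i<dim_vec v. \<bar>v $ i\<bar>)"

definition norminf_vec :: "real vec \<Rightarrow> real" where
  "norminf_vec v = Max (insert 0 {\<bar>v $ i\<bar> | i. i < dim_vec v})"

definition D_ROC :: "real mat \<Rightarrow> real mat \<Rightarrow> nat \<Rightarrow> nat \<Rightarrow> real" where
  "D_ROC A D s t = Inf {c. c \<ge> 0 \<and>
     (\<forall>u v. u \<in> carrier_vec (dim_col D) \<longrightarrow> v \<in> carrier_vec (dim_col D) \<longrightarrow>
        sparse_vec s u \<longrightarrow> sparse_vec t v \<longrightarrow>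
        \<bar>(A *\<^sub>v (D *\<^sub>v u)) \<bullet> (A *\<^sub>v (D *\<^sub>v v)) - (D *\<^sub>v u) \<bullet> (D *\<^sub>v v)\<bar>
          \<le> c * norm2_vec u * norm2_vec v)}"

end

theory Submission
  imports Defs "Jordan_Normal_Form.Determinant"
begin


lemma sum_abs_le_sqrt:
  fixes g :: "nat \<Rightarrow> real"
  assumes fin: "finite S"
  shows "(\<Sum>i\<in>S. \<bar>g i\<bar>) \<le> sqrt (real (card S)) * sqrt (\<Sum>i\<in>S. (g i)^2)"
proof (cases "(\<Sum>i\<in>S. (g i)^2) = 0")
  case True
  then have "\<forall>i\<in>S. g i = 0" using fin by (simp add: sum_nonneg_eq_0_iff)
  then show ?thesis by simp
next
  case False
  define Q where "Q = (\<Sum>i\<in>S. (g i)^2)"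
  have Qnn: "Q \<ge> 0" unfolding Q_def by (simp add: sum_nonneg)
  have Qpos: "Q > 0" using False Qnn Q_def by auto
  have cS: "card S > 0" using False fin by (metis card_gt_0_iff sum.empty)
  define a where "a = sqrt (real (card S))"
  define b where "b = sqrt Q"
  have apos: "a > 0" using cS a_def by simp
  have bpos: "b > 0" using Qpos b_def by simp
  have a2: "a^2 = real (card S)" using a_def by simp
  have b2: "b^2 = Q" using b_def Qnn by simp
  define t where "t = b / a"
  have tpos: "t > 0" using apos bpos t_def by simp
  have "\<forall>i\<in>S. \<bar>g i\<bar> \<le> ((g i)^2 / t + t) / 2"
  proof
    fix i
    have "0 \<le> (\<bar>g i\<bar> - t)^2" by simp
    then have "2*\<bar>g i\<bar>*t \<le> (g i)^2 + t^2" by (simp add: power2_eq_square algebra_simps)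
    then show "\<bar>g i\<bar> \<le> ((g i)^2 / t + t) / 2" using tpos by (simp add: field_simps power2_eq_square)
  qed
  then have "(\<Sum>i\<in>S. \<bar>g i\<bar>) \<le> (\<Sum>i\<in>S. ((g i)^2 / t + t)/2)" by (intro sum_mono) auto
  also have "\<dots> = (Q/t + real (card S) * t)/2"
    by (simp add: Q_def sum_divide_distrib[symmetric] sum.distrib)
  also have "\<dots> = a * b"
    using apos bpos unfolding t_def by (simp add: a2[symmetric] b2[symmetric] field_simps power2_eq_square)
  finally show ?thesis by (simp add: a_def b_def Q_def)
qed

lemma top_bound:
  fixes g a :: "nat \<Rightarrow> real"
  assumes fin: "finite I" and SI: "S \<subseteq> I" and cardS: "card S = s" and spos: "0 < s"
    and top: "\<forall>i\<in>S. \<forall>j\<in>I-S. g j \<le> g i"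
    and gnn: "\<forall>i\<in>I. 0 \<le> g i"
    and a: "\<forall>i\<in>I. 0 \<le> a i \<and> a i \<le> \<eta>"
    and asum: "sum a I \<le> real s * \<eta>"
  shows "(\<Sum>i\<in>I. g i * a i) \<le> \<eta> * sum g S"
proof -
  have Sne: "S \<noteq> {}" using cardS spos by auto
  have finS: "finite S" using fin SI finite_subset by auto
  define m where "m = Min (g ` S)"
  have mS: "\<forall>i\<in>S. m \<le> g i" using finS m_def by auto
  have "m \<in> g ` S" using Min_in[of "g ` S"] finS Sne m_def by auto
  then obtain i0 where i0: "i0 \<in> S" "m = g i0" by auto
  have mout: "\<forall>j\<in>I-S. g j \<le> m" using top i0 by auto
  have mnn: "m \<ge> 0" using i0 gnn SI by auto
  have split: "(\<Sum>i\<in>I. g i * a i) = (\<Sum>i\<in>I-S. g i * a i) + (\<Sum>i\<in>S. g i * a i)"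
    using sum.subset_diff[OF SI fin] by simp
  have "(\<Sum>i\<in>I-S. g i * a i) \<le> (\<Sum>i\<in>I-S. m * a i)"
    by (rule sum_mono) (use mout a in \<open>auto intro: mult_right_mono\<close>)
  also have "\<dots> = m * sum a (I - S)" by (simp add: sum_distrib_left)
  also have "sum a (I-S) = sum a I - sum a S" using sum_diff[OF fin SI] by simp
  also have "m * (sum a I - sum a S) \<le> m * (real s * \<eta> - sum a S)"
    using asum mnn by (intro mult_left_mono) auto
  also have "real s * \<eta> - sum a S = (\<Sum>i\<in>S. \<eta> - a i)"
    using cardS by (simp add: sum_subtractf)
  also have "m * (\<Sum>i\<in>S. \<eta> - a i) = (\<Sum>i\<in>S. m * (\<eta> - a i))" by (simp add: sum_distrib_left)
  also have "\<dots> \<le> (\<Sum>i\<in>S. g i * (\<eta> - a i))"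
  proof (rule sum_mono)
    fix i assume "i \<in> S"
    then have "m \<le> g i" "0 \<le> \<eta> - a i" using mS a SI by auto
    then show "m * (\<eta> - a i) \<le> g i * (\<eta> - a i)" by (rule mult_right_mono)
  qed
  finally have "(\<Sum>i\<in>I. g i * a i) \<le> (\<Sum>i\<in>S. g i * (\<eta> - a i)) + (\<Sum>i\<in>S. g i * a i)"
    using split by linarith
  also have "\<dots> = \<eta> * sum g S"
    by (simp add: sum.distrib[symmetric] sum_distrib_left algebra_simps)
  finally show ?thesis .
qed

lemma top_set:
  fixes g :: "nat \<Rightarrow> real"
  assumes fin: "finite I" and sI: "s \<le> card I" and spos: "0 < s"
  shows "\<exists>S\<subseteq>I. card S = s \<and> (\<forall>i\<in>S. \<forall>j\<in>I-S. g j \<le> g i)"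
proof -
  define F where "F = {S. S \<subseteq> I \<and> card S = s}"
  have finF: "finite F" using fin unfolding F_def
    by (rule finite_subset[rotated, OF finite_Pow_iff[THEN iffD2]]) auto
  have neF: "F \<noteq> {}" using obtain_subset_with_card_n[OF sI] F_def by blast
  define M where "M = Max (sum g ` F)"
  have "M \<in> sum g ` F" using Max_in[of "sum g ` F"] finF neF M_def by auto
  then obtain S where SF: "S \<in> F" and SM: "sum g S = M" by auto
  have Smax: "\<forall>T\<in>F. sum g T \<le> sum g S" using SM M_def finF by auto
  have SI: "S \<subseteq> I" and cS: "card S = s" using SF F_def by auto
  have finS: "finite S" using fin SI finite_subset by auto
  have "\<forall>i\<in>S. \<forall>j\<in>I-S. g j \<le> g i"
  proof (intro ballI)
    fix i j assume i: "i \<in> S" and j: "j \<in> I - S"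
    show "g j \<le> g i"
    proof (rule ccontr)
      assume c: "\<not> g j \<le> g i"
      let ?T = "insert j (S - {i})"
      have jn: "j \<notin> S - {i}" using j by auto
      have "card ?T = card (S - {i}) + 1" using jn finS by simp
      also have "card (S - {i}) = s - 1" using i cS finS by simp
      finally have "card ?T = s" using spos by simp
      then have "?T \<in> F" using SI j F_def by auto
      moreover have "sum g ?T = g j + (sum g S - g i)"
        using jn finS i by (simp add: sum_diff1)
      ultimately show False using Smax c by fastforce
    qed
  qed
  then show ?thesis using SI cS by blast
qed

lemma comp_le_norm2:
  assumes "i < dim_vec x"
  shows "\<bar>x $ i\<bar> \<le> norm2_vec x"
proof -
  have "(x $ i)^2 \<le> (\<Sum>j\<in>{0..<dim_vec x}. x $ j * x $ j)"
    using assms by (simp add: power2_eq_square) (rule member_le_sum, auto)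
  then have "sqrt ((x $ i)^2) \<le> sqrt (x \<bullet> x)" unfolding scalar_prod_def by (rule real_sqrt_le_mono)
  then show ?thesis by (simp add: norm2_vec_def)
qed

lemma norm2_nn: "norm2_vec x \<ge> 0"
  unfolding norm2_vec_def scalar_prod_def by (simp add: sum_nonneg)



lemma B_eq:
  fixes A D :: "real mat"
  assumes A: "A \<in> carrier_mat m n" and D: "D \<in> carrier_mat n d"
    and x: "x \<in> carrier_vec d" and y: "y \<in> carrier_vec d"
  shows "(A *\<^sub>v (D *\<^sub>v x)) \<bullet> (A *\<^sub>v (D *\<^sub>v y)) - (D *\<^sub>v x) \<bullet> (D *\<^sub>v y)
    = ((D\<^sup>T * (A\<^sup>T * (A * D)) - D\<^sup>T * D) *\<^sub>v x) \<bullet> y"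
proof -
  have ADx: "A *\<^sub>v (D *\<^sub>v x) \<in> carrier_vec m" using A D x by auto
  have Dx: "D *\<^sub>v x \<in> carrier_vec n" using D x by auto
  have Dy: "D *\<^sub>v y \<in> carrier_vec n" using D y by auto
  have 1: "(A *\<^sub>v (D *\<^sub>v x)) \<bullet> (A *\<^sub>v (D *\<^sub>v y)) = (D\<^sup>T *\<^sub>v (A\<^sup>T *\<^sub>v (A *\<^sub>v (D *\<^sub>v x)))) \<bullet> y"
    using transpose_vec_mult_scalar[OF A Dy ADx] transpose_vec_mult_scalar[OF D y, of "A\<^sup>T *\<^sub>v (A *\<^sub>v (D *\<^sub>v x))"] A ADx
    by auto
  have 2: "(D *\<^sub>v x) \<bullet> (D *\<^sub>v y) = (D\<^sup>T *\<^sub>v (D *\<^sub>v x)) \<bullet> y"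
    using transpose_vec_mult_scalar[OF D y Dx] by auto
  have 3: "(D\<^sup>T * (A\<^sup>T * (A * D)) - D\<^sup>T * D) *\<^sub>v x
      = D\<^sup>T *\<^sub>v (A\<^sup>T *\<^sub>v (A *\<^sub>v (D *\<^sub>v x))) - D\<^sup>T *\<^sub>v (D *\<^sub>v x)"
  proof -
    have e1: "A * D *\<^sub>v x = A *\<^sub>v (D *\<^sub>v x)" using A D x by (rule assoc_mult_mat_vec)
    have e2: "A\<^sup>T * (A * D) *\<^sub>v x = A\<^sup>T *\<^sub>v (A * D *\<^sub>v x)"
      using A D x by (intro assoc_mult_mat_vec[of _ n m]) auto
    have e3: "D\<^sup>T * (A\<^sup>T * (A * D)) *\<^sub>v x = D\<^sup>T *\<^sub>v (A\<^sup>T * (A * D) *\<^sub>v x)"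
      using A D x by (intro assoc_mult_mat_vec[of _ d n]) auto
    have e4: "D\<^sup>T * D *\<^sub>v x = D\<^sup>T *\<^sub>v (D *\<^sub>v x)"
      using A D x by (intro assoc_mult_mat_vec[of _ d n]) auto
    have e5: "(D\<^sup>T * (A\<^sup>T * (A * D)) - D\<^sup>T * D) *\<^sub>v x = D\<^sup>T * (A\<^sup>T * (A * D)) *\<^sub>v x - D\<^sup>T * D *\<^sub>v x"
      using A D x by (intro minus_mult_distrib_mat_vec[of _ d d]) auto
    show ?thesis unfolding e5 e3 e4 e2 e1 ..
  qed
  show ?thesis unfolding 1 2 3
    using A D x y by (subst minus_scalar_prod_distrib[of _ d]) auto
qed

lemma matvec_bound:
  fixes G :: "real mat"
  assumes G: "G \<in> carrier_mat d d"
  shows "\<exists>C\<ge>0. \<forall>x y. x \<in> carrier_vec d \<longrightarrow> y \<in> carrier_vec d \<longrightarrow>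
     \<bar>(G *\<^sub>v x) \<bullet> y\<bar> \<le> C * norm2_vec x * norm2_vec y"
proof -
  define K where "K = (\<Sum>i<d. \<Sum>j<d. \<bar>G $$ (i,j)\<bar>)"
  have Knn: "K \<ge> 0" unfolding K_def by (simp add: sum_nonneg)
  show ?thesis
  proof (intro exI[of _ "real d * K"] conjI allI impI)
    show "0 \<le> real d * K" using Knn by simp
    fix x y :: "real vec" assume x: "x \<in> carrier_vec d" and y: "y \<in> carrier_vec d"
    have rowb: "\<bar>(G *\<^sub>v x) $ i\<bar> \<le> K * norm2_vec x" if i: "i < d" for i
    proof -
      have "(G *\<^sub>v x) $ i = (\<Sum>j<d. G $$ (i,j) * x $ j)"
        using G x i by (auto simp: scalar_prod_def row_def atLeast0LessThan)
      then have "\<bar>(G *\<^sub>v x) $ i\<bar> \<le> (\<Sum>j<d. \<bar>G $$ (i,j)\<bar> * \<bar>x $ j\<bar>)"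
        by (auto intro: order.trans[OF sum_abs] simp: abs_mult)
      also have "\<dots> \<le> (\<Sum>j<d. \<bar>G $$ (i,j)\<bar> * norm2_vec x)"
        using x comp_le_norm2[of _ x] by (intro sum_mono mult_left_mono) auto
      also have "\<dots> = (\<Sum>j<d. \<bar>G $$ (i,j)\<bar>) * norm2_vec x" by (simp add: sum_distrib_right)
      also have "(\<Sum>j<d. \<bar>G $$ (i,j)\<bar>) \<le> K"
        unfolding K_def using i by (intro member_le_sum) (auto simp: sum_nonneg)
      then have "(\<Sum>j<d. \<bar>G $$ (i,j)\<bar>) * norm2_vec x \<le> K * norm2_vec x"
        using norm2_nn by (intro mult_right_mono) auto
      finally show ?thesis .
    qed
    have "\<bar>(G *\<^sub>v x) \<bullet> y\<bar> \<le> (\<Sum>i<d. \<bar>(G *\<^sub>v x) $ i\<bar> * \<bar>y $ i\<bar>)"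
      using y by (auto simp: scalar_prod_def atLeast0LessThan abs_mult intro: order.trans[OF sum_abs])
    also have "\<dots> \<le> (\<Sum>i<d. (K * norm2_vec x) * norm2_vec y)"
    proof (rule sum_mono)
      fix i assume "i \<in> {..<d}"
      then have "\<bar>(G *\<^sub>v x) $ i\<bar> \<le> K * norm2_vec x" "\<bar>y $ i\<bar> \<le> norm2_vec y"
        using rowb comp_le_norm2[of i y] y by auto
      then show "\<bar>(G *\<^sub>v x) $ i\<bar> * \<bar>y $ i\<bar> \<le> (K * norm2_vec x) * norm2_vec y"
        by (intro mult_mono) (auto simp: Knn norm2_nn)
    qed
    also have "\<dots> = real d * K * norm2_vec x * norm2_vec y" by simp
    finally show "\<bar>(G *\<^sub>v x) \<bullet> y\<bar> \<le> real d * K * norm2_vec x * norm2_vec y" .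
  qed
qed

lemma roc_prop:
  fixes A D :: "real mat"
  assumes A: "A \<in> carrier_mat m n" and D: "D \<in> carrier_mat n d"
  shows "D_ROC A D s t \<ge> 0 \<and> (\<forall>x y. x \<in> carrier_vec d \<longrightarrow> y \<in> carrier_vec d \<longrightarrow>
        sparse_vec s x \<longrightarrow> sparse_vec t y \<longrightarrow>
        \<bar>(A *\<^sub>v (D *\<^sub>v x)) \<bullet> (A *\<^sub>v (D *\<^sub>v y)) - (D *\<^sub>v x) \<bullet> (D *\<^sub>v y)\<bar>
          \<le> D_ROC A D s t * norm2_vec x * norm2_vec y)"
proof -
  define G where "G = D\<^sup>T * (A\<^sup>T * (A * D)) - D\<^sup>T * D"
  have G: "G \<in> carrier_mat d d" using A D G_def by auto
  obtain C where C0: "C \<ge> 0" and CB: "\<forall>x y. x \<in> carrier_vec d \<longrightarrow> y \<in> carrier_vec d \<longrightarrow>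
     \<bar>(G *\<^sub>v x) \<bullet> y\<bar> \<le> C * norm2_vec x * norm2_vec y"
    using matvec_bound[OF G] by blast
  define P where "P = (\<lambda>c. c \<ge> 0 \<and>
     (\<forall>u v. u \<in> carrier_vec (dim_col D) \<longrightarrow> v \<in> carrier_vec (dim_col D) \<longrightarrow>
        sparse_vec s u \<longrightarrow> sparse_vec t v \<longrightarrow>
        \<bar>(A *\<^sub>v (D *\<^sub>v u)) \<bullet> (A *\<^sub>v (D *\<^sub>v v)) - (D *\<^sub>v u) \<bullet> (D *\<^sub>v v)\<bar>
          \<le> c * norm2_vec u * norm2_vec v))"
  have roc: "D_ROC A D s t = Inf (Collect P)" unfolding D_ROC_def P_def by simp
  have dc: "dim_col D = d" using D by simp
  have CP: "P C" unfolding P_def dc using C0 CB B_eq[OF A D] G_def by auto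
  have ne: "Collect P \<noteq> {}" using CP by auto
  have bdd: "bdd_below (Collect P)" unfolding P_def by (intro bdd_belowI[of _ 0]) auto
  have nn: "D_ROC A D s t \<ge> 0" unfolding roc using ne by (intro cInf_greatest) (auto simp: P_def)
  show ?thesis
  proof (intro conjI allI impI nn)
    fix x y :: "real vec" assume x: "x \<in> carrier_vec d" and y: "y \<in> carrier_vec d"
      and sx: "sparse_vec s x" and sy: "sparse_vec t y"
    define b where "b = \<bar>(A *\<^sub>v (D *\<^sub>v x)) \<bullet> (A *\<^sub>v (D *\<^sub>v y)) - (D *\<^sub>v x) \<bullet> (D *\<^sub>v y)\<bar>"
    define a where "a = norm2_vec x * norm2_vec y"
    have a0: "a \<ge> 0" unfolding a_def by (simp add: norm2_nn)
    have all: "b \<le> c * a" if "P c" for c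
      using that x y sx sy unfolding P_def dc a_def b_def by (auto simp: mult.assoc)
    show "b \<le> D_ROC A D s t * norm2_vec x * norm2_vec y"
    proof (cases "a = 0")
      case True
      then have "b \<le> 0" using all[OF CP] by simp
      moreover have "0 \<le> D_ROC A D s t * norm2_vec x * norm2_vec y"
        using nn norm2_nn[of x] norm2_nn[of y] by (intro mult_nonneg_nonneg) auto
      ultimately show ?thesis by linarith
    next
      case False
      then have ap: "a > 0" using a0 by simp
      have "b / a \<le> D_ROC A D s t" unfolding roc
        using ne all ap by (intro cInf_greatest) (auto simp: pos_divide_le_eq)
      then show ?thesis using ap by (simp add: pos_divide_le_eq a_def mult.assoc)
    qed
  qed
qed



lemma orth:
  fixes D Dbar :: "real mat"
  assumes nd: "n \<le> d" and D: "D \<in> carrier_mat n d" and DD: "D * D\<^sup>T = 1\<^sub>m n"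
    and Db: "Dbar \<in> carrier_mat (d - n) d"
    and DbD: "Dbar * D\<^sup>T = 0\<^sub>m (d - n) n" and DbDb: "Dbar * Dbar\<^sup>T = 1\<^sub>m (d - n)"
    and x: "x \<in> carrier_vec d" and y: "y \<in> carrier_vec d"
  shows "(D *\<^sub>v x) \<bullet> (D *\<^sub>v y) + (Dbar *\<^sub>v x) \<bullet> (Dbar *\<^sub>v y) = x \<bullet> y"
proof -
  define M where "M = mat d d (\<lambda>(i,j). if i < n then D $$ (i,j) else Dbar $$ (i-n,j))"
  have M: "M \<in> carrier_mat d d" unfolding M_def by simp
  have Dent: "(\<Sum>j\<in>{0..<d}. D $$ (i,j) * D $$ (k,j)) = (if i = k then 1 else 0)"
    if "i < n" "k < n" for i k
  proof -
    have "(D * D\<^sup>T) $$ (i,k) = (if i = k then 1 else 0)" using DD that by simp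
    then show ?thesis using D that by (simp add: scalar_prod_def row_def col_def)
  qed
  have Dbent: "(\<Sum>j\<in>{0..<d}. Dbar $$ (i,j) * Dbar $$ (k,j)) = (if i = k then 1 else 0)"
    if "i < d - n" "k < d - n" for i k
  proof -
    have "(Dbar * Dbar\<^sup>T) $$ (i,k) = (if i = k then 1 else 0)" using DbDb that by simp
    then show ?thesis using Db that by (simp add: scalar_prod_def row_def col_def)
  qed
  have Mixent: "(\<Sum>j\<in>{0..<d}. Dbar $$ (i,j) * D $$ (k,j)) = 0"
    if "i < d - n" "k < n" for i k
  proof -
    have "(Dbar * D\<^sup>T) $$ (i,k) = 0" using DbD that by simp
    then show ?thesis using Db D that by (simp add: scalar_prod_def row_def col_def)
  qed
  have MM: "M * M\<^sup>T = 1\<^sub>m d"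
  proof (rule eq_matI)
    fix i k assume i: "i < dim_row (1\<^sub>m d)" and k: "k < dim_col (1\<^sub>m d)"
    then have i: "i < d" and k: "k < d" by auto
    have "(M * M\<^sup>T) $$ (i,k) = (\<Sum>j\<in>{0..<d}. M $$ (i,j) * M $$ (k,j))"
      using M i k by (simp add: scalar_prod_def row_def col_def)
    also have "\<dots> = (if i = k then 1 else 0)"
    proof (cases "i < n"; cases "k < n")
      assume "i < n" "k < n" then show ?thesis using Dent i k by (simp add: M_def)
    next
      assume a: "i < n" "\<not> k < n"
      then have "(\<Sum>j\<in>{0..<d}. M $$ (i,j) * M $$ (k,j)) = (\<Sum>j\<in>{0..<d}. Dbar $$ (k-n,j) * D $$ (i,j))"
        using i k by (intro sum.cong) (auto simp: M_def)
      then show ?thesis using Mixent[of "k-n" i] a i k by auto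
    next
      assume a: "\<not> i < n" "k < n"
      then have "(\<Sum>j\<in>{0..<d}. M $$ (i,j) * M $$ (k,j)) = (\<Sum>j\<in>{0..<d}. Dbar $$ (i-n,j) * D $$ (k,j))"
        using i k by (intro sum.cong) (auto simp: M_def)
      then show ?thesis using Mixent[of "i-n" k] a i k by auto
    next
      assume a: "\<not> i < n" "\<not> k < n"
      then have "(\<Sum>j\<in>{0..<d}. M $$ (i,j) * M $$ (k,j)) = (\<Sum>j\<in>{0..<d}. Dbar $$ (i-n,j) * Dbar $$ (k-n,j))"
        using i k by (intro sum.cong) (auto simp: M_def)
      then show ?thesis using Dbent[of "i-n" "k-n"] a i k by auto
    qed
    finally show "(M * M\<^sup>T) $$ (i,k) = 1\<^sub>m d $$ (i,k)" using i k by simp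
  qed (use M in auto)
  have MtM: "M\<^sup>T * M = 1\<^sub>m d" using mat_mult_left_right_inverse[OF M _ MM] M by auto
  have Mx: "M *\<^sub>v x \<in> carrier_vec d" using M x by auto
  have "(M *\<^sub>v x) \<bullet> (M *\<^sub>v y) = (M\<^sup>T *\<^sub>v (M *\<^sub>v x)) \<bullet> y"
    using transpose_vec_mult_scalar[OF M y Mx] by simp
  also have "M\<^sup>T *\<^sub>v (M *\<^sub>v x) = x"
    using assoc_mult_mat_vec[of "M\<^sup>T" d d M d x] M x MtM by simp
  finally have e1: "(M *\<^sub>v x) \<bullet> (M *\<^sub>v y) = x \<bullet> y" .
  have comp: "(M *\<^sub>v z) $ i = (if i < n then (D *\<^sub>v z) $ i else (Dbar *\<^sub>v z) $ (i - n))"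
    if z: "z \<in> carrier_vec d" and i: "i < d" for z i
    using z i D Db by (auto simp: M_def scalar_prod_def row_def)
  have "(M *\<^sub>v x) \<bullet> (M *\<^sub>v y) = (\<Sum>i\<in>{0..<d}. (M *\<^sub>v x) $ i * (M *\<^sub>v y) $ i)"
    using M by (simp add: scalar_prod_def)
  also have "\<dots> = (\<Sum>i\<in>{0..<n}. (M *\<^sub>v x) $ i * (M *\<^sub>v y) $ i) + (\<Sum>i\<in>{n..<d}. (M *\<^sub>v x) $ i * (M *\<^sub>v y) $ i)"
    using nd by (simp add: sum.atLeastLessThan_concat)
  also have "(\<Sum>i\<in>{0..<n}. (M *\<^sub>v x) $ i * (M *\<^sub>v y) $ i) = (D *\<^sub>v x) \<bullet> (D *\<^sub>v y)"
    using D nd by (auto simp: scalar_prod_def comp[OF x] comp[OF y] intro!: sum.cong)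
  also have "(\<Sum>i\<in>{n..<d}. (M *\<^sub>v x) $ i * (M *\<^sub>v y) $ i) = (\<Sum>k\<in>{0..<d-n}. (M *\<^sub>v x) $ (k+n) * (M *\<^sub>v y) $ (k+n))"
    using nd sum.shift_bounds_nat_ivl[of "\<lambda>i. (M *\<^sub>v x) $ i * (M *\<^sub>v y) $ i" 0 n "d-n"] by simp
  also have "\<dots> = (Dbar *\<^sub>v x) \<bullet> (Dbar *\<^sub>v y)"
    using Db nd by (auto simp: scalar_prod_def comp[OF x] comp[OF y] intro!: sum.cong)
  finally show ?thesis using e1 by simp
qed



theorem proposition2:
  fixes n d m s1 s2 :: nat and \<eta> :: real
    and D Dbar A :: "real mat" and u v :: "real vec"
  assumes "n \<le> d"
    and "D \<in> carrier_mat n d" and "D * D\<^sup>T = 1\<^sub>m n"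
    and "Dbar \<in> carrier_mat (d - n) d"
    and "Dbar * D\<^sup>T = 0\<^sub>m (d - n) n" and "Dbar * Dbar\<^sup>T = 1\<^sub>m (d - n)"
    and "A \<in> carrier_mat m n"
    and "0 < s1" and "0 < s2" and "s1 \<le> n" and "s2 \<le> n"
    and "\<eta> > 0"
    and "u \<in> carrier_vec d" and "v \<in> carrier_vec d"
    and "supp_vec u \<inter> supp_vec v = {}"
    and "sparse_vec s1 u"
    and "norm1_vec v - norm2_vec v \<le> (real s2 - sqrt (real s2)) * \<eta>"
    and "norminf_vec v \<le> \<eta>"
  shows "\<bar>(A *\<^sub>v (D *\<^sub>v u)) \<bullet> (A *\<^sub>v (D *\<^sub>v v)) + (Dbar *\<^sub>v u) \<bullet> (Dbar *\<^sub>v v)\<bar>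
           \<le> (1 + sqrt 2 / 2) * \<eta> * sqrt (real s2) * D_ROC A D s1 s2 * norm2_vec u"
proof -
  note as = assms
  have D: "D \<in> carrier_mat n d" and A: "A \<in> carrier_mat m n" and u: "u \<in> carrier_vec d"
    and v: "v \<in> carrier_vec d" using as by auto
  define \<theta> where "\<theta> = D_ROC A D s1 s2"
  have roc: "\<theta> \<ge> 0" "\<And>x y. x \<in> carrier_vec d \<Longrightarrow> y \<in> carrier_vec d \<Longrightarrow>
        sparse_vec s1 x \<Longrightarrow> sparse_vec s2 y \<Longrightarrow>
        \<bar>(A *\<^sub>v (D *\<^sub>v x)) \<bullet> (A *\<^sub>v (D *\<^sub>v y)) - (D *\<^sub>v x) \<bullet> (D *\<^sub>v y)\<bar>
          \<le> \<theta> * norm2_vec x * norm2_vec y"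
    using roc_prop[OF A D, of s1 s2] unfolding \<theta>_def by auto
  define G where "G = D\<^sup>T * (A\<^sup>T * (A * D)) - D\<^sup>T * D"
  define g where "g = G *\<^sub>v u"
  have Gc: "G \<in> carrier_mat d d" using A D G_def by auto
  have g: "g \<in> carrier_vec d" unfolding g_def using Gc u by auto
  have Bg: "\<And>y. y \<in> carrier_vec d \<Longrightarrow>
     (A *\<^sub>v (D *\<^sub>v u)) \<bullet> (A *\<^sub>v (D *\<^sub>v y)) - (D *\<^sub>v u) \<bullet> (D *\<^sub>v y) = g \<bullet> y"
    using B_eq[OF A D u] unfolding g_def G_def by blast
  have uv0: "u \<bullet> v = 0"
  proof -
    have "\<forall>i\<in>{0..<d}. u $ i * v $ i = 0"
      using as(15) u v unfolding supp_vec_def by auto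
    then show ?thesis using v unfolding scalar_prod_def by (intro sum.neutral) auto
  qed
  have lhs: "(A *\<^sub>v (D *\<^sub>v u)) \<bullet> (A *\<^sub>v (D *\<^sub>v v)) + (Dbar *\<^sub>v u) \<bullet> (Dbar *\<^sub>v v) = g \<bullet> v"
    using orth[OF as(1-6) u v] uv0 Bg[OF v] by linarith
  have vinf: "\<bar>v $ i\<bar> \<le> \<eta>" if "i < d" for i
  proof -
    have "\<bar>v $ i\<bar> \<le> norminf_vec v" unfolding norminf_vec_def
      using that v by (intro Max_ge) auto
    then show ?thesis using as(18) by linarith
  qed
  define N1 where "N1 = norm1_vec v"
  define N2 where "N2 = norm2_vec v"
  define r where "r = sqrt (real s2)"
  have r1: "r \<ge> 1" using as(9) r_def by simp
  have r2: "r^2 = real s2" using r_def by simp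
  have N1: "N1 = (\<Sum>i<d. \<bar>v $ i\<bar>)" using v N1_def norm1_vec_def by simp
  have N2nn: "N2 \<ge> 0" using N2_def norm2_nn by simp
  have "N2^2 = v \<bullet> v" using N2_def norm2_vec_def
    by (simp add: scalar_prod_def sum_nonneg)
  also have "\<dots> = (\<Sum>i<d. \<bar>v $ i\<bar> * \<bar>v $ i\<bar>)" using v by (simp add: scalar_prod_def atLeast0LessThan abs_mult[symmetric])
  also have "\<dots> \<le> (\<Sum>i<d. \<bar>v $ i\<bar> * \<eta>)" using vinf by (intro sum_mono mult_left_mono) auto
  also have "\<dots> = \<eta> * N1" using N1 by (simp add: sum_distrib_left mult.commute)
  finally have N2sq: "N2^2 \<le> \<eta> * N1" .
  have cond: "N1 - N2 \<le> (r^2 - r) * \<eta>" using as(17) N1_def N2_def r2 r_def by simp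
  have N2le: "N2 \<le> r * \<eta>"
  proof (rule ccontr)
    assume "\<not> N2 \<le> r * \<eta>"
    then have c: "N2 - r * \<eta> > 0" by simp
    have "N2 + (r - 1) * \<eta> > 0" using c r1 as(12) by (smt (verit) mult_nonneg_nonneg)
    then have "(N2 - r * \<eta>) * (N2 + (r - 1) * \<eta>) > 0" using c by simp
    moreover have "(N2 - r * \<eta>) * (N2 + (r - 1) * \<eta>) = N2^2 - \<eta> * (N2 + (r^2 - r) * \<eta>)"
      by (simp add: algebra_simps power2_eq_square)
    moreover have "\<eta> * (N2 + (r^2 - r) * \<eta>) \<ge> \<eta> * N1"
      using cond as(12) by (intro mult_left_mono) auto
    ultimately show False using N2sq by linarith
  qed
  have N1le: "N1 \<le> real s2 * \<eta>" using cond N2le r2 by (simp add: algebra_simps)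
  obtain S where SI: "S \<subseteq> {0..<d}" and cS: "card S = s2"
    and top: "\<forall>i\<in>S. \<forall>j\<in>{0..<d}-S. \<bar>g $ j\<bar> \<le> \<bar>g $ i\<bar>"
    using top_set[of "{0..<d}" s2 "\<lambda>i. \<bar>g $ i\<bar>"] as(1,9,11) by auto
  have finS: "finite S" using SI finite_subset by blast
  define Q where "Q = (\<Sum>i\<in>S. (g $ i)^2)"
  have Qnn: "Q \<ge> 0" unfolding Q_def by (simp add: sum_nonneg)
  define w where "w = vec d (\<lambda>i. if i \<in> S then g $ i else 0)"
  have w: "w \<in> carrier_vec d" unfolding w_def by simp
  have sw: "sparse_vec s2 w"
  proof -
    have "supp_vec w \<subseteq> S" unfolding supp_vec_def w_def by (auto split: if_splits)
    then show ?thesis unfolding sparse_vec_def using card_mono[OF finS] cS by auto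
  qed
  have sumS: "(\<Sum>i\<in>{0..<d}. f i * (if i \<in> S then g $ i else 0)) = (\<Sum>i\<in>S. f i * g $ i)" for f
  proof -
    have "(\<Sum>i\<in>{0..<d}. f i * (if i \<in> S then g $ i else 0)) = (\<Sum>i\<in>{0..<d}. if i \<in> S then f i * g $ i else 0)"
      by (intro sum.cong) auto
    also have "\<dots> = (\<Sum>i\<in>{0..<d} \<inter> S. f i * g $ i)" by (simp add: sum.inter_restrict)
    also have "{0..<d} \<inter> S = S" using SI by auto
    finally show ?thesis .
  qed
  have gw: "g \<bullet> w = Q" unfolding Q_def w_def scalar_prod_def
    using sumS[of "\<lambda>i. g $ i"] by (simp add: power2_eq_square)
  have ww: "w \<bullet> w = Q" unfolding Q_def scalar_prod_def
  proof -
    have "(\<Sum>i\<in>{0..<dim_vec w}. w $ i * w $ i) = (\<Sum>i\<in>{0..<d}. (if i \<in> S then g $ i else 0) * (if i \<in> S then g $ i else 0))"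
      unfolding w_def by simp
    also have "\<dots> = (\<Sum>i\<in>S. (if i \<in> S then g $ i else 0) * g $ i)" by (rule sumS)
    also have "\<dots> = (\<Sum>i\<in>S. (g $ i)^2)" by (intro sum.cong) (auto simp: power2_eq_square)
    finally show "(\<Sum>i\<in>{0..<dim_vec w}. w $ i * w $ i) = (\<Sum>i\<in>S. (g $ i)^2)" .
  qed
  have nw: "norm2_vec w = sqrt Q" using ww norm2_vec_def by simp
  have "Q \<le> \<theta> * norm2_vec u * sqrt Q"
    using roc(2)[OF u w as(16) sw] Bg[OF w] gw nw by simp
  then have sQ: "sqrt Q \<le> \<theta> * norm2_vec u"
  proof (cases "Q = 0")
    case True then show ?thesis using roc(1) norm2_nn[of u] by simp
  next
    case False
    then have qp: "sqrt Q > 0" using Qnn by simp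
    assume "Q \<le> \<theta> * norm2_vec u * sqrt Q"
    moreover have "sqrt Q * sqrt Q = Q" using Qnn by simp
    ultimately have "sqrt Q * sqrt Q \<le> (\<theta> * norm2_vec u) * sqrt Q" by linarith
    then show ?thesis using qp by (rule mult_right_le_imp_le)
  qed
  have "\<bar>g \<bullet> v\<bar> \<le> (\<Sum>i\<in>{0..<d}. \<bar>g $ i * v $ i\<bar>)"
    using v unfolding scalar_prod_def by (simp add: sum_abs)
  also have "\<dots> = (\<Sum>i\<in>{0..<d}. \<bar>g $ i\<bar> * \<bar>v $ i\<bar>)" by (simp add: abs_mult)
  also have "\<dots> \<le> \<eta> * (\<Sum>i\<in>S. \<bar>g $ i\<bar>)"
  proof (rule top_bound[of "{0..<d}" S s2 "\<lambda>i. \<bar>g $ i\<bar>" "\<lambda>i. \<bar>v $ i\<bar>" \<eta>])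
    show "finite {0..<d}" by simp
    show "S \<subseteq> {0..<d}" by (rule SI)
    show "card S = s2" by (rule cS)
    show "0 < s2" by (rule as(9))
    show "\<forall>i\<in>S. \<forall>j\<in>{0..<d} - S. \<bar>g $ j\<bar> \<le> \<bar>g $ i\<bar>" by (rule top)
    show "\<forall>i\<in>{0..<d}. 0 \<le> \<bar>g $ i\<bar>" by simp
    show "\<forall>i\<in>{0..<d}. 0 \<le> \<bar>v $ i\<bar> \<and> \<bar>v $ i\<bar> \<le> \<eta>" using vinf by simp
    show "(\<Sum>i\<in>{0..<d}. \<bar>v $ i\<bar>) \<le> real s2 * \<eta>" using N1le N1 by (simp add: atLeast0LessThan)
  qed
  also have "\<dots> \<le> \<eta> * (r * sqrt Q)"
  proof (rule mult_left_mono)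
    show "(\<Sum>i\<in>S. \<bar>g $ i\<bar>) \<le> r * sqrt Q"
      using sum_abs_le_sqrt[OF finS, of "\<lambda>i. g $ i"] unfolding cS r_def Q_def .
    show "0 \<le> \<eta>" using as(12) by simp
  qed
  also have "\<dots> \<le> \<eta> * (r * (\<theta> * norm2_vec u))"
  proof (rule mult_left_mono)
    show "r * sqrt Q \<le> r * (\<theta> * norm2_vec u)" using sQ r1 by (intro mult_left_mono) auto
    show "0 \<le> \<eta>" using as(12) by simp
  qed
  finally have main: "\<bar>g \<bullet> v\<bar> \<le> \<eta> * (r * (\<theta> * norm2_vec u))" .
  define P where "P = \<eta> * (r * (\<theta> * norm2_vec u))"
  have pnn: "0 \<le> P"
    unfolding P_def using as(12) r1 roc(1) norm2_nn[of u] by (intro mult_nonneg_nonneg) auto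
  have s2nn: "0 \<le> sqrt 2 / 2" by simp
  have "P \<le> (1 + sqrt 2 / 2) * P" using pnn s2nn by (simp add: distrib_right)
  also have "(1 + sqrt 2 / 2) * P = (1 + sqrt 2 / 2) * \<eta> * sqrt (real s2) * D_ROC A D s1 s2 * norm2_vec u"
    unfolding P_def r_def \<theta>_def by (simp only: mult.assoc)
  finally show ?thesis unfolding lhs using main P_def by linarith
qed

end
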